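(* Let $P=P(m_1,\dots,m_{n-1})$ be a natural unit interval order on $[n]$, let $C$ be its Catalan path, and let $r$ be the bounce number of $C$. Write $X_{\mathrm{inc}(P)}(\mathbf{x},t)=\sum_{\lambda\vdash n}B_\lambda(t)s_\lambda$. Then $B_\lambda(t)=0$ for every partition $\lambda=(\lambda_1,\dots,\lambda_k)$ with $\lambda_1>r$.
   Context: A natural unit interval order $P(m_1,\dots,m_{n-1})$ is defined for integers $m_1\le m_2\le\cdots\le m_{n-1}\le n$ with $m_i\ge i$ for all $i$: it is the poset on $[n]$ with $i<_P j$ iff $i<n$ and $j\in\{m_i+1,\dots,n\}$. Its incomparability graph $\mathrm{inc}(P)$ has vertex set $[n]$ and an edge $\{i,j\}$ ($i<j$) iff $j\le m_i$. For a graph $G$ with vertex set $V\subset\mathbb{P}$, the chromatic quasisymmetric function is $X_G(\mathbf{x},t)=\sum_\kappa t^{\mathrm{asc}(\kappa)}\mathbf{x}_\kappa$, summed over proper colorings $\kappa:V\to\mathbb{P}$, where $\mathbf{x}_\kappa=\prod_{v\in V}x_{\kappa(v)}$ and $\mathrm{asc}(\kappa)$ is the number of edges $\{i,j\}$ with $i<j$ and $\kappa(i)<\kappa(j)$; for natural unit interval orders the coefficient of each $t^i$ is a symmetric function, and $s_\lambda$ denotes the Schur function. The Catalan path of $P$ is the lattice path from $(0,0)$ to $(n,n)$ with unit north and east steps whose $i$-th east step lies on the line $y=m_i$ for $i=1,\dots,n-1$ and whose last east step lies on $y=n$. The bounce path of a Catalan path $C$: start at $(0,0)$, travel north along $C$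 until reaching the beginning of an east step of $C$, then travel east until hitting the diagonal $y=x$, then north until again reaching the beginning of an east step of $C$, then east to the diagonal, and so on, until reaching $(n,n)$. The bounce number of $C$ is one less than the number of points at which the bounce path meets the line $y=x$. *)

theory Defs
  imports Main "HOL-Library.FuncSet" "HOL-Computational_Algebra.Polynomial"
begin

text \<open>Natural unit interval order P(m_1,...,m_{n-1}) on [n] = {1..n}:
  m is given as a function nat => nat, only the values m 1, ..., m (n-1) matter.\<close>
definition nuio :: "nat \<Rightarrow> (nat \<Rightarrow> nat) \<Rightarrow> bool" where
  "nuio n m \<longleftrightarrow> 1 \<le> n \<and>
     (\<forall>i. 1 \<le> i \<and> i \<le> n - 1 \<longrightarrow> i \<le> m i \<and> m i \<le> n) \<and>
     (\<forall>i. 1 \<le> i \<and> i < n - 1 \<longrightarrow> m i \<le> m (Suc i))"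

definition nuio_less :: "nat \<Rightarrow> (nat \<Rightarrow> nat) \<Rightarrow> nat \<Rightarrow> nat \<Rightarrow> bool" where
  "nuio_less n m i j \<longleftrightarrow> i < n \<and> m i < j \<and> j \<le> n"

definition inc_edge :: "nat \<Rightarrow> (nat \<Rightarrow> nat) \<Rightarrow> nat \<Rightarrow> nat \<Rightarrow> bool" where
  "inc_edge n m i j \<longleftrightarrow> 1 \<le> i \<and> i < j \<and> j \<le> n \<and> j \<le> m i"

definition proper_coloring :: "nat \<Rightarrow> (nat \<Rightarrow> nat) \<Rightarrow> (nat \<Rightarrow> nat) \<Rightarrow> bool" where
  "proper_coloring n m \<kappa> \<longleftrightarrow> \<kappa> \<in> {1..n} \<rightarrow>\<^sub>E UNIV \<and> (\<forall>v\<in>{1..n}. 1 \<le> \<kappa> v) \<and>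
     (\<forall>i j. inc_edge n m i j \<longrightarrow> \<kappa> i \<noteq> \<kappa> j)"

definition asc :: "nat \<Rightarrow> (nat \<Rightarrow> nat) \<Rightarrow> (nat \<Rightarrow> nat) \<Rightarrow> nat" where
  "asc n m \<kappa> = card {(i, j). inc_edge n m i j \<and> \<kappa> i < \<kappa> j}"

text \<open>Coefficient of t^k x^alpha in X_{inc(P)}(x,t), where x^alpha = prod_c x_c^(alpha c).\<close>
definition chrom_coeff :: "nat \<Rightarrow> (nat \<Rightarrow> nat) \<Rightarrow> (nat \<Rightarrow> nat) \<Rightarrow> nat \<Rightarrow> nat" where
  "chrom_coeff n m \<alpha> k = card {\<kappa>. proper_coloring n m \<kappa> \<and>
      (\<forall>c. card {v\<in>{1..n}. \<kappa> v = c} = \<alpha> c) \<and> asc n m \<kappa> = k}"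

definition is_partition_of :: "nat \<Rightarrow> nat list \<Rightarrow> bool" where
  "is_partition_of n la \<longleftrightarrow> sorted_wrt (\<ge>) la \<and> (\<forall>p\<in>set la. 0 < p) \<and> sum_list la = n"

definition cells :: "nat list \<Rightarrow> (nat \<times> nat) set" where
  "cells la = {(i, j). i < length la \<and> j < la ! i}"

definition ssyt :: "nat list \<Rightarrow> (nat \<times> nat \<Rightarrow> nat) \<Rightarrow> bool" where
  "ssyt la T \<longleftrightarrow> T \<in> cells la \<rightarrow>\<^sub>E UNIV \<and> (\<forall>x\<in>cells la. 1 \<le> T x) \<and>
     (\<forall>i j. (i, Suc j) \<in> cells la \<longrightarrow> T (i, j) \<le> T (i, Suc j)) \<and>
     (\<forall>i j. (Suc i, j) \<in> cells la \<longrightarrow> T (i, j) < T (Suc i, j))"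

text \<open>Coefficient of x^alpha in the Schur function s_lambda (Kostka number).\<close>
definition schur_coeff :: "nat list \<Rightarrow> (nat \<Rightarrow> nat) \<Rightarrow> nat" where
  "schur_coeff la \<alpha> = card {T. ssyt la T \<and> (\<forall>c. card {x\<in>cells la. T x = c} = \<alpha> c)}"

text \<open>Bounce path: the bounce path meets the diagonal at points (b_k,b_k) with
  b_0 = 0 and b_{k+1} = m_{b_k + 1} (where m_n := n), until b_k = n.\<close>
definition bounce_step :: "nat \<Rightarrow> (nat \<Rightarrow> nat) \<Rightarrow> nat \<Rightarrow> nat" where
  "bounce_step n m b = (if b + 1 \<le> n - 1 then m (b + 1) else n)"

definition bounce_number :: "nat \<Rightarrow> (nat \<Rightarrow> nat) \<Rightarrow> nat" where
  "bounce_number n m = (LEAST k. (bounce_step n m ^^ k) 0 = n)"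

end

theory Submission
  imports Defs
begin

lemma take_sum_eq_imp_eq:
  "(\<forall>i. sum_list (take i xs) = sum_list (take i (ys::nat list))) \<Longrightarrow> (\<forall>p\<in>set xs. 0<p)
   \<Longrightarrow> (\<forall>p\<in>set ys. 0<p) \<Longrightarrow> xs = ys"
proof (induction xs arbitrary: ys)
  case Nil
  then show ?case
    by (cases ys) (auto dest: spec[where x="Suc 0"])
next
  case (Cons x xs)
  show ?case
  proof (cases ys)
    case Nil
    then show ?thesis using Cons.prems by (auto dest: spec[where x="Suc 0"])
  next
    case (Cons y ys')
    have xy: "x = y" using Cons.prems(1) \<open>ys = y # ys'\<close> by (auto dest: spec[where x="Suc 0"])
    have "\<forall>i. sum_list (take i xs) = sum_list (take i ys')"
    proof
      fix i
      show "sum_list (take i xs) = sum_list (take i ys')"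
        using Cons.prems(1) \<open>ys = y # ys'\<close> xy by (auto dest: spec[where x="Suc i"])
    qed
    then have "xs = ys'" using Cons.IH Cons.prems \<open>ys = y # ys'\<close> by auto
    then show ?thesis using xy \<open>ys = y # ys'\<close> by simp
  qed
qed

lemma length_le_sum_list: "(\<forall>p\<in>set xs. 0<(p::nat)) \<Longrightarrow> length xs \<le> sum_list xs"
  by (induction xs) auto

lemma sum_list_take_le: "sum_list (take i (xs::nat list)) \<le> sum_list xs"
proof -
  have "sum_list xs = sum_list (take i xs) + sum_list (drop i xs)"
    by (metis append_take_drop_id sum_list_append)
  then show ?thesis by simp
qed

lemma sum_list_take_Suc:
  "sum_list (take (Suc i) (xs::nat list)) = sum_list (take i xs) + (if i < length xs then xs ! i else 0)"
  by (simp add: take_Suc_conv_app_nth)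

lemma m_mono:
  assumes "nuio n m" "1 \<le> i" "i \<le> j" "j \<le> n - 1"
  shows "m i \<le> m j"
  using assms(3,4)
proof (induction j rule: dec_induct)
  case base then show ?case by simp
next
  case (step k)
  then have "m k \<le> m (Suc k)" using assms(1,2) unfolding nuio_def by auto
  with step show ?case by simp
qed

lemma bs_le: "nuio n m \<Longrightarrow> b \<le> n \<Longrightarrow> bounce_step n m b \<le> n"
  unfolding nuio_def bounce_step_def by auto

lemma bs_gt: "nuio n m \<Longrightarrow> b < n \<Longrightarrow> b < bounce_step n m b"
proof -
  assume a: "nuio n m" "b < n"
  show ?thesis
  proof (cases "b + 1 \<le> n - 1")
    case True
    then have "b + 1 \<le> m (b+1)" using a unfolding nuio_def by auto
    then show ?thesis using True unfolding bounce_step_def by simp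
  qed (use a in \<open>simp add: bounce_step_def\<close>)
qed

lemma bs_n: "bounce_step n m n = n"
  unfolding bounce_step_def by auto

lemma iter_le: "nuio n m \<Longrightarrow> (bounce_step n m ^^ k) 0 \<le> n"
  by (induction k) (auto intro: bs_le)

lemma iter_ge: "nuio n m \<Longrightarrow> min k n \<le> (bounce_step n m ^^ k) 0"
proof (induction k)
  case 0 then show ?case by simp
next
  case (Suc k)
  have le: "(bounce_step n m ^^ k) 0 \<le> n" using Suc iter_le by blast
  show ?case
  proof (cases "(bounce_step n m ^^ k) 0 = n")
    case True then show ?thesis by (simp add: bs_n)
  next
    case False
    then have "(bounce_step n m ^^ k) 0 < bounce_step n m ((bounce_step n m ^^ k) 0)"
      using le bs_gt Suc.prems by simp
    then show ?thesis using Suc by simp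
  qed
qed

lemma iter_mono_Suc: "nuio n m \<Longrightarrow> (bounce_step n m ^^ k) 0 \<le> (bounce_step n m ^^ Suc k) 0"
  using iter_le[of n m k] bs_gt[of n m] bs_n[of n m]
  by (cases "(bounce_step n m ^^ k) 0 = n") (auto intro: less_imp_le)

lemma indep_card:
  assumes nu: "nuio n m" and S: "S \<subseteq> {1..n}"
    and ind: "\<forall>u\<in>S. \<forall>v\<in>S. \<not> inc_edge n m u v"
  shows "card S \<le> bounce_number n m"
proof -
  define b where "b k = (bounce_step n m ^^ k) 0" for k
  define r where "r = bounce_number n m"
  have n1: "1 \<le> n" using nu unfolding nuio_def by simp
  have bn: "b n = n" using iter_ge[OF nu, of n] iter_le[OF nu, of n] unfolding b_def by simp
  have br: "b r = n" unfolding r_def bounce_number_def b_def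
    by (rule LeastI[of _ n]) (use bn b_def in simp)
  have r1: "r \<noteq> 0" using br n1 unfolding b_def by (cases r) auto
  define f where "f v = (LEAST k. v \<le> b (Suc k))" for v
  have fprops: "f v < r \<and> b (f v) < v \<and> v \<le> b (Suc (f v))" if "v \<in> {1..n}" for v
  proof -
    have ex: "v \<le> b (Suc (r - 1))" using br r1 that by simp
    have a: "v \<le> b (Suc (f v))" unfolding f_def by (rule LeastI[where P="\<lambda>k. v \<le> b (Suc k)", OF ex])
    have c: "f v \<le> r - 1" unfolding f_def by (rule Least_le[where P="\<lambda>k. v \<le> b (Suc k)", OF ex])
    have d: "b (f v) < v"
    proof (cases "f v")
      case 0 then show ?thesis using that unfolding b_def by simp
    next
      case (Suc k)
      have "\<not> v \<le> b (Suc k)" unfolding f_def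
        by (rule not_less_Least) (use Suc f_def in simp)
      then show ?thesis using Suc by simp
    qed
    show ?thesis using a c d r1 by simp
  qed
  have inj: "inj_on f S"
  proof -
    have no: False if "u \<in> S" "v \<in> S" "u < v" "f u = f v" for u v
    proof -
      define k where "k = f u"
      have u: "b k < u" "u \<le> b (Suc k)" using fprops[of u] S that unfolding k_def by auto
      have v: "b k < v" "v \<le> b (Suc k)" using fprops[of v] S that unfolding k_def by auto
      have vn: "v \<le> n" using S that by auto
      have bs: "b (Suc k) = bounce_step n m (b k)" unfolding b_def by simp
      have "inc_edge n m u v"
      proof (cases "b k + 1 \<le> n - 1")
        case True
        then have "b (Suc k) = m (b k + 1)" using bs unfolding bounce_step_def by simp
        moreover have "m (b k + 1) \<le> m u"
          by (rule m_mono[OF nu]) (use u True that vn in auto)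
        ultimately show ?thesis unfolding inc_edge_def using u v vn that S by auto
      next
        case False
        then show ?thesis using u that vn by auto
      qed
      then show False using ind that by blast
    qed
    show ?thesis unfolding inj_on_def
      by (metis linorder_neqE_nat no)
  qed
  have "card S \<le> card {..<r}"
    by (rule card_inj_on_le[OF inj]) (use fprops S in auto)
  then show ?thesis unfolding r_def by simp
qed


definition alpha_of :: "nat list \<Rightarrow> nat \<Rightarrow> nat" where
  "alpha_of mu c = (if 1 \<le> c \<and> c \<le> length mu then mu ! (c - 1) else 0)"

lemma cells_Sigma: "cells la = Sigma {..<length la} (\<lambda>r. {..<la ! r})"
  unfolding cells_def by auto

lemma finite_cells: "finite (cells la)"
  unfolding cells_Sigma by auto

lemma alpha_sum: "(\<Sum>c\<in>{1..i}. alpha_of mu c) = sum_list (take i mu)"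
proof (induction i)
  case 0 then show ?case by simp
next
  case (Suc i)
  have "(\<Sum>c\<in>{1..Suc i}. alpha_of mu c) = (\<Sum>c\<in>{1..i}. alpha_of mu c) + alpha_of mu (Suc i)"
    by simp
  then show ?case using Suc by (simp add: sum_list_take_Suc alpha_of_def)
qed

lemma rows_card:
  "card {(r,j). r < i \<and> r < length la \<and> j < la ! r} = sum_list (take i la)"
proof -
  have "{(r,j). r < i \<and> r < length la \<and> j < la ! r} = Sigma {..<min i (length la)} (\<lambda>r. {..<la ! r})"
    by auto
  then have "card {(r,j). r < i \<and> r < length la \<and> j < la ! r} = (\<Sum>r<min i (length la). la ! r)"
    by (simp add: card_SigmaI)
  also have "\<dots> = sum_list (take i la)"
    by (simp add: sum_list_sum_nth atLeast0LessThan min.commute)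
  finally show ?thesis .
qed

lemma col_bound:
  assumes "ssyt la T" "sorted_wrt (\<ge>) la" "(r,j) \<in> cells la"
  shows "r + 1 \<le> T (r,j)"
  using assms(3)
proof (induction r)
  case 0 then show ?case using assms(1) unfolding ssyt_def by auto
next
  case (Suc r)
  have c: "(r, j) \<in> cells la"
  proof -
    have "Suc r < length la" "j < la ! Suc r" using Suc.prems unfolding cells_def by auto
    moreover have "la ! Suc r \<le> la ! r" using sorted_wrt_nth_less[OF assms(2), of r "Suc r"] \<open>Suc r < length la\<close> by simp
    ultimately show ?thesis unfolding cells_def by auto
  qed
  have "T (r, j) < T (Suc r, j)" using assms(1) Suc.prems unfolding ssyt_def by auto
  with Suc.IH[OF c] show ?case by simp
qed

lemma card_content_sum:
  assumes "finite A"
  shows "(\<Sum>c\<in>{1..i}. card {x\<in>A. T x = (c::nat)}) = card {x\<in>A. T x \<in> {1..i}}"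
proof (induction i)
  case 0 then show ?case by simp
next
  case (Suc i)
  have "{x\<in>A. T x \<in> {1..Suc i}} = {x\<in>A. T x \<in> {1..i}} \<union> {x\<in>A. T x = Suc i}" by auto
  moreover have "card ({x\<in>A. T x \<in> {1..i}} \<union> {x\<in>A. T x = Suc i}) =
      card {x\<in>A. T x \<in> {1..i}} + card {x\<in>A. T x = Suc i}"
    by (rule card_Un_disjoint) (use assms in auto)
  ultimately show ?case using Suc by simp
qed

lemma dominance:
  assumes "ssyt nu T" "sorted_wrt (\<ge>) nu" "\<forall>c. card {x\<in>cells nu. T x = c} = alpha_of mu c"
  shows "sum_list (take i mu) \<le> sum_list (take i nu)"
proof -
  have "sum_list (take i mu) = (\<Sum>c\<in>{1..i}. card {x\<in>cells nu. T x = c})"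
    using assms(3) alpha_sum by simp
  also have "\<dots> = card {x\<in>cells nu. T x \<in> {1..i}}"
    by (rule card_content_sum[OF finite_cells])
  also have "\<dots> \<le> card {(r,j). r < i \<and> r < length nu \<and> j < nu ! r}"
  proof (rule card_mono)
    show "finite {(r,j). r < i \<and> r < length nu \<and> j < nu ! r}"
      by (rule finite_subset[OF _ finite_cells[of nu]]) (auto simp: cells_def)
    show "{x \<in> cells nu. T x \<in> {1..i}} \<subseteq> {(r,j). r < i \<and> r < length nu \<and> j < nu ! r}"
    proof (safe)
      fix r j assume "(r,j) \<in> cells nu" "T (r,j) \<in> {1..i}"
      moreover have "r + 1 \<le> T (r,j)" by (rule col_bound[OF assms(1,2)]) fact
      ultimately show "r < i" "r < length nu" "j < nu ! r" unfolding cells_def by auto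
    qed
  qed
  also have "\<dots> = sum_list (take i nu)" by (rule rows_card)
  finally show ?thesis .
qed

definition Tcan :: "nat list \<Rightarrow> nat \<times> nat \<Rightarrow> nat" where
  "Tcan mu = (\<lambda>x. if x \<in> cells mu then fst x + 1 else undefined)"

lemma Tcan_ssyt:
  assumes "sorted_wrt (\<ge>) mu"
  shows "ssyt mu (Tcan mu) \<and> (\<forall>c. card {x\<in>cells mu. Tcan mu x = c} = alpha_of mu c)"
proof -
  have col: "(i, j) \<in> cells mu" if "(Suc i, j) \<in> cells mu" for i j
  proof -
    have "Suc i < length mu" "j < mu ! Suc i" using that unfolding cells_def by auto
    moreover have "mu ! Suc i \<le> mu ! i" using sorted_wrt_nth_less[OF assms, of i "Suc i"] \<open>Suc i < length mu\<close> by simp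
    ultimately show ?thesis unfolding cells_def by auto
  qed
  have row: "(i, j) \<in> cells mu" if "(i, Suc j) \<in> cells mu" for i j
    using that unfolding cells_def by auto
  have s: "ssyt mu (Tcan mu)"
    unfolding ssyt_def
  proof (intro conjI allI impI ballI)
    show "Tcan mu \<in> cells mu \<rightarrow>\<^sub>E UNIV" unfolding Tcan_def by auto
    show "1 \<le> Tcan mu x" if "x \<in> cells mu" for x using that unfolding Tcan_def by simp
    show "Tcan mu (i, j) \<le> Tcan mu (i, Suc j)" if "(i, Suc j) \<in> cells mu" for i j
      using that row[OF that] unfolding Tcan_def by simp
    show "Tcan mu (i, j) < Tcan mu (Suc i, j)" if "(Suc i, j) \<in> cells mu" for i j
      using that col[OF that] unfolding Tcan_def by simp
  qed
  have cnt: "card {x\<in>cells mu. Tcan mu x = c} = alpha_of mu c" for c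
  proof (cases "1 \<le> c \<and> c \<le> length mu")
    case True
    have "{x\<in>cells mu. Tcan mu x = c} = {c - 1} \<times> {..<mu ! (c - 1)}"
      using True unfolding Tcan_def cells_def by auto
    then show ?thesis using True by (simp add: alpha_of_def)
  next
    case False
    have e: "{x\<in>cells mu. Tcan mu x = c} = {}"
      using False unfolding Tcan_def cells_def by auto
    have "alpha_of mu c = 0" using False unfolding alpha_of_def by auto
    then show ?thesis unfolding e by simp
  qed
  show ?thesis using s cnt by blast
qed

lemma schur_self_nonzero:
  assumes "sorted_wrt (\<ge>) mu"
  shows "schur_coeff mu (alpha_of mu) \<noteq> 0"
proof -
  let ?S = "{T. ssyt mu T \<and> (\<forall>c. card {x\<in>cells mu. T x = c} = alpha_of mu c)}"
  have ne: "Tcan mu \<in> ?S" using Tcan_ssyt[OF assms] by blast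
  have "?S \<subseteq> cells mu \<rightarrow>\<^sub>E {1..length mu}"
  proof
    fix T assume T: "T \<in> ?S"
    show "T \<in> cells mu \<rightarrow>\<^sub>E {1..length mu}"
    proof (rule PiE_I)
      fix x assume x: "x \<in> cells mu"
      have "x \<in> {y\<in>cells mu. T y = T x}" using x by simp
      then have "card {y\<in>cells mu. T y = T x} \<noteq> 0"
        using finite_cells[of mu] by (metis (no_types, lifting) card_0_eq empty_iff finite_subset mem_Collect_eq subsetI)
      then have "alpha_of mu (T x) \<noteq> 0" using T by simp
      then show "T x \<in> {1..length mu}" unfolding alpha_of_def by (auto split: if_splits)
    next
      fix x assume "x \<notin> cells mu"
      then show "T x = undefined" using T unfolding ssyt_def by auto
    qed
  qed
  then have "finite ?S" by (rule finite_subset) (simp add: finite_PiE finite_cells)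
  then show ?thesis using ne unfolding schur_coeff_def by (auto simp: card_eq_0_iff)
qed


lemma chrom_zero:
  assumes nu: "nuio n m" and a: "alpha (1::nat) > bounce_number n m"
  shows "chrom_coeff n m alpha k = 0"
proof -
  have "{\<kappa>. proper_coloring n m \<kappa> \<and>
      (\<forall>c. card {v\<in>{1..n}. \<kappa> v = c} = alpha c) \<and> asc n m \<kappa> = k} = {}"
  proof (rule ccontr)
    assume "\<not> ?thesis"
    then obtain \<kappa> where pc: "proper_coloring n m \<kappa>"
      and cnt: "\<forall>c. card {v\<in>{1..n}. \<kappa> v = c} = alpha c" by auto
    let ?S = "{v\<in>{1..n}. \<kappa> v = 1}"
    have "card ?S \<le> bounce_number n m"
    proof (rule indep_card[OF nu])
      show "?S \<subseteq> {1..n}" by auto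
      show "\<forall>u\<in>?S. \<forall>v\<in>?S. \<not> inc_edge n m u v"
        using pc unfolding proper_coloring_def by (metis (mono_tags, lifting) mem_Collect_eq)
    qed
    then show False using cnt a by (metis not_le)
  qed
  then show ?thesis unfolding chrom_coeff_def by (metis card.empty)
qed

lemma finite_parts: "finite {la. is_partition_of n la}"
proof (rule finite_subset)
  show "{la. is_partition_of n la} \<subseteq> {xs. set xs \<subseteq> {1..n} \<and> length xs \<le> n}"
  proof safe
    fix la x assume p: "is_partition_of n la" "x \<in> set la"
    then show "x \<in> {1..n}" unfolding is_partition_of_def
      using member_le_sum_list[of x la] by auto
  next
    fix la assume p: "is_partition_of n la"
    then show "length la \<le> n" unfolding is_partition_of_def
      using length_le_sum_list[of la] by auto
  qed
  show "finite {xs. set xs \<subseteq> {1..n} \<and> length xs \<le> n}"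
    by (rule finite_lists_length_le) simp
qed

theorem lemma2p16:
  fixes n :: nat and m :: "nat \<Rightarrow> nat" and B :: "nat list \<Rightarrow> int poly"
  assumes "nuio n m"
    and "\<forall>\<alpha> k. int (chrom_coeff n m \<alpha> k) =
           (\<Sum>la\<in>{la. is_partition_of n la}. coeff (B la) k * int (schur_coeff la \<alpha>))"
  shows "\<forall>la. is_partition_of n la \<and> hd la > bounce_number n m \<longrightarrow> B la = 0"
proof -
  define r where "r = bounce_number n m"
  have n1: "1 \<le> n" using assms(1) unfolding nuio_def by simp
  define phi where "phi la = (\<Sum>i\<le>n. sum_list (take i la))" for la :: "nat list"
  define bd where "bd = Suc n * n"
  let ?P = "{la. is_partition_of n la}"
  have ne: "la \<noteq> []" if "is_partition_of n la" for la
    using that n1 unfolding is_partition_of_def by auto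
  have phi_le: "phi la \<le> bd" if "is_partition_of n la" for la
  proof -
    have "phi la \<le> of_nat (card {..n}) * n" unfolding phi_def
      by (rule sum_bounded_above) (use that sum_list_take_le in \<open>auto simp: is_partition_of_def\<close>)
    then show ?thesis unfolding bd_def by simp
  qed
  have key: "\<forall>mu. bd - phi mu = d \<longrightarrow> is_partition_of n mu \<longrightarrow> hd mu > r \<longrightarrow> (\<forall>k. coeff (B mu) k = 0)" for d
  proof (induction d rule: less_induct)
    case (less d)
    show ?case
    proof (intro allI impI)
      fix mu k assume d: "bd - phi mu = d" and pmu: "is_partition_of n mu" and hmu: "hd mu > r"
      let ?a = "alpha_of mu"
      have mune: "mu \<noteq> []" using ne pmu by simp
      have a1: "?a 1 = hd mu" using mune unfolding alpha_of_def by (cases mu) auto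
      have c0: "chrom_coeff n m ?a k = 0"
        by (rule chrom_zero[OF assms(1)]) (use a1 hmu r_def in simp)
      have other: "coeff (B la) k * int (schur_coeff la ?a) = 0" if la: "la \<in> ?P - {mu}" for la
      proof (cases "schur_coeff la ?a = 0")
        case True then show ?thesis by simp
      next
        case False
        have "{T. ssyt la T \<and> (\<forall>c. card {x\<in>cells la. T x = c} = ?a c)} \<noteq> {}"
          using False unfolding schur_coeff_def by (metis card.empty)
        then obtain T where T: "ssyt la T" "\<forall>c. card {x\<in>cells la. T x = c} = ?a c"
          by blast
        have pla: "is_partition_of n la" "la \<noteq> mu" using la by auto
        have dom: "sum_list (take i mu) \<le> sum_list (take i la)" for i
          by (rule dominance[OF T(1) _ T(2)]) (use pla in \<open>simp add: is_partition_of_def\<close>)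
        have lane: "la \<noteq> []" using ne pla by simp
        have hla: "hd la > r"
          using dom[of 1] hmu lane mune by (cases la; cases mu) auto
        have strict: "phi mu < phi la"
        proof -
          have "\<exists>i\<in>{..n}. sum_list (take i mu) < sum_list (take i la)"
          proof (rule ccontr)
            assume "\<not> ?thesis"
            then have eq: "sum_list (take i mu) = sum_list (take i la)" if "i \<le> n" for i
              using dom[of i] that by (meson atMost_iff le_neq_implies_less)
            have "\<forall>i. sum_list (take i mu) = sum_list (take i la)"
            proof
              fix i show "sum_list (take i mu) = sum_list (take i la)"
              proof (cases "i \<le> n")
                case True then show ?thesis using eq by simp
              next
                case False
                have l1: "length mu \<le> n"
                  using length_le_sum_list[of mu] pmu unfolding is_partition_of_def by auto
                have l2: "length la \<le> n"
                  using length_le_sum_list[of la] pla unfolding is_partition_of_def by auto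
                then show ?thesis using l1 False pmu pla unfolding is_partition_of_def by simp
              qed
            qed
            then have "mu = la" by (rule take_sum_eq_imp_eq) (use pmu pla in \<open>auto simp: is_partition_of_def\<close>)
            then show False using pla by simp
          qed
          then show ?thesis unfolding phi_def by (intro sum_strict_mono_ex1) (auto simp: dom)
        qed
        have "bd - phi la < d" using strict phi_le[OF pla(1)] d by simp
        then have "\<forall>k. coeff (B la) k = 0" using less pla(1) hla by blast
        then show ?thesis by simp
      qed
      have "0 = (\<Sum>la\<in>?P. coeff (B la) k * int (schur_coeff la ?a))"
        using assms(2) c0 by (metis of_nat_0)
      also have "\<dots> = coeff (B mu) k * int (schur_coeff mu ?a) +
          (\<Sum>la\<in>?P - {mu}. coeff (B la) k * int (schur_coeff la ?a))"
        by (rule sum.remove[OF finite_parts]) (use pmu in simp)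
      also have "(\<Sum>la\<in>?P - {mu}. coeff (B la) k * int (schur_coeff la ?a)) = 0"
        by (rule sum.neutral) (use other in blast)
      finally have "coeff (B mu) k * int (schur_coeff mu ?a) = 0" by simp
      moreover have "schur_coeff mu ?a \<noteq> 0"
        by (rule schur_self_nonzero) (use pmu in \<open>simp add: is_partition_of_def\<close>)
      ultimately show "coeff (B mu) k = 0" by simp
    qed
  qed
  show ?thesis
  proof (intro allI impI)
    fix la assume "is_partition_of n la \<and> hd la > bounce_number n m"
    then have "\<forall>k. coeff (B la) k = 0" using key[of "bd - phi la"] r_def by blast
    then show "B la = 0" by (simp add: poly_eq_iff)
  qed
qed

end
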